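(* Let $(H,G,t,\Phi)$ be a crossed module of Lie groups with associated crossed module of Lie algebras $(\mathfrak{h},\mathfrak{g},\mathrm{d}t,\phi)$. If $(\mathcal{B}_1,\mathcal{B}_0)$ is a Rota-Baxter operator on $(H,G,t,\Phi)$, then $(B_1,B_0)$, where $B_1=(\mathcal{B}_1)_{*e_H}$ and $B_0=(\mathcal{B}_0)_{*e_G}$, is a Rota-Baxter operator on $(\mathfrak{h},\mathfrak{g},\mathrm{d}t,\phi)$.
   Context: A crossed module of Lie groups is a quadruple $(H,G,t,\Phi)$ where $H,G$ are Lie groups, $t:H\to G$ is a Lie group homomorphism and $\Phi:G\to\mathrm{Aut}(H)$ is a smooth action by automorphisms such that $\Phi(t(p))q=pqp^{-1}$ and $t(\Phi(a)p)=a\,t(p)\,a^{-1}$. Its associated crossed module of Lie algebras $(\mathfrak{h},\mathfrak{g},\mathrm{d}t,\phi)$ has $\mathfrak{h},\mathfrak{g}$ the Lie algebras of $H,G$, $\mathrm{d}t=t_{*e}$, $\phi(x)u=\frac{d}{ds}\frac{d}{dr}\big|_{s=r=0}\Phi(\exp(sx))\exp(ru)$. A Rota-Baxter operator on a Lie group $G$ is a smooth map $\mathcal{B}:G\to G$ with $\mathcal{B}(a)\mathcal{B}(b)=\mathcal{B}(a\mathcal{B}(a)b\mathcal{B}(a)^{-1})$. A Rota-Baxter operator on $(H,G,t,\Phi)$ is a pair $(\mathcal{B}_1,\mathcal{B}_0)$ of smooth maps such that (i) $\mathcal{B}_1,\mathcal{B}_0$ are Rota-Baxter operators on $H,G$;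 (ii) $t\circ\mathcal{B}_1=\mathcal{B}_0\circ t$; (iii) $\Phi(\mathcal{B}_0(a))\mathcal{B}_1(p)=\mathcal{B}_1\big(\Phi(a\mathcal{B}_0(a))(p\mathcal{B}_1(p))\cdot\Phi(\mathcal{B}_0(a))\mathcal{B}_1(p)^{-1}\big)$ for all $a\in G,p\in H$. A Rota-Baxter operator (of weight 1) on a Lie algebra $\mathfrak{g}$ is a linear map $B$ with $[B(x),B(y)]=B([B(x),y]+[x,B(y)]+[x,y])$. A Rota-Baxter operator on a crossed module of Lie algebras $(\mathfrak{h},\mathfrak{g},\mathrm{d}t,\phi)$ is a pair $(B_1,B_0)$ of linear maps such that (i) $B_1,B_0$ are Rota-Baxter operators on $\mathfrak{h},\mathfrak{g}$; (ii) $\mathrm{d}t\circ B_1=B_0\circ\mathrm{d}t$; (iii) $\phi(B_0(x))B_1(u)=B_1\big(\phi(x)B_1(u)+\phi(B_0(x))u+\phi(x)u\big)$. *)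

theory Defs
  imports "HOL-Analysis.Analysis" "HOL-Algebra.Group"
begin

fun Ck_on :: "nat \<Rightarrow> 'a::real_normed_vector set \<Rightarrow> ('a \<Rightarrow> 'b::real_normed_vector) \<Rightarrow> bool" where
  "Ck_on 0 S f = continuous_on S f"
| "Ck_on (Suc k) S f =
     ((\<forall>x\<in>S. f differentiable (at x)) \<and> (\<forall>v. Ck_on k S (\<lambda>x. frechet_derivative f (at x) v)))"

definition smooth_on :: "'a::real_normed_vector set \<Rightarrow> ('a \<Rightarrow> 'b::real_normed_vector) \<Rightarrow> bool" where
  "smooth_on S f \<longleftrightarrow> open S \<and> (\<forall>k. Ck_on k S f)"

definition is_chart :: "('m::topological_space set \<times> ('m \<Rightarrow> 'e::euclidean_space)) \<Rightarrow> bool" where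
  "is_chart Uc \<longleftrightarrow> (case Uc of (U, c) \<Rightarrow>
      open U \<and> open (c ` U) \<and> homeomorphism U (c ` U) c (inv_into U c))"

definition smooth_atlas :: "('m::topological_space set \<times> ('m \<Rightarrow> 'e::euclidean_space)) set \<Rightarrow> bool" where
  "smooth_atlas A \<longleftrightarrow>
     (\<forall>Uc\<in>A. is_chart Uc) \<and> \<Union>(fst ` A) = UNIV \<and>
     (\<forall>(U, c)\<in>A. \<forall>(V, d)\<in>A. smooth_on (c ` (U \<inter> V)) (d \<circ> inv_into U c))"

definition smooth_map ::
  "('m::topological_space set \<times> ('m \<Rightarrow> 'e::euclidean_space)) set \<Rightarrow>
   ('n::topological_space set \<times> ('n \<Rightarrow> 'f::euclidean_space)) set \<Rightarrow> ('m \<Rightarrow> 'n) \<Rightarrow> bool" where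
  "smooth_map A A' f \<longleftrightarrow> continuous_on UNIV f \<and>
     (\<forall>(U, c)\<in>A. \<forall>(V, d)\<in>A'. smooth_on (c ` (U \<inter> f -` V)) (d \<circ> f \<circ> inv_into U c))"

definition prod_atlas ::
  "('m set \<times> ('m \<Rightarrow> 'e)) set \<Rightarrow> ('n set \<times> ('n \<Rightarrow> 'f)) set \<Rightarrow>
   (('m \<times> 'n) set \<times> ('m \<times> 'n \<Rightarrow> 'e \<times> 'f)) set" where
  "prod_atlas A B = {(U \<times> V, \<lambda>(x, y). (c x, d y)) | U c V d. (U, c) \<in> A \<and> (V, d) \<in> B}"

definition lie_group ::
  "('g::{t2_space, second_countable_topology}) monoid \<Rightarrow> ('g set \<times> ('g \<Rightarrow> 'e::euclidean_space)) set \<Rightarrow> bool" where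
  "lie_group G A \<longleftrightarrow> group G \<and> carrier G = UNIV \<and> smooth_atlas A \<and>
     smooth_map (prod_atlas A A) A (\<lambda>(x, y). x \<otimes>\<^bsub>G\<^esub> y) \<and>
     smooth_map A A (\<lambda>x. inv\<^bsub>G\<^esub> x)"

definition crossed_module ::
  "('h::{t2_space, second_countable_topology}) monoid \<Rightarrow> ('h set \<times> ('h \<Rightarrow> 'eh::euclidean_space)) set \<Rightarrow>
   ('g::{t2_space, second_countable_topology}) monoid \<Rightarrow> ('g set \<times> ('g \<Rightarrow> 'eg::euclidean_space)) set \<Rightarrow>
   ('h \<Rightarrow> 'g) \<Rightarrow> ('g \<Rightarrow> 'h \<Rightarrow> 'h) \<Rightarrow> bool" where
  "crossed_module H AH G AG t \<Phi> \<longleftrightarrow>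
     lie_group H AH \<and> lie_group G AG \<and>
     t \<in> hom H G \<and> smooth_map AH AG t \<and>
     (\<forall>a. \<Phi> a \<in> iso H H) \<and>
     \<Phi> \<one>\<^bsub>G\<^esub> = id \<and> (\<forall>a b. \<Phi> (a \<otimes>\<^bsub>G\<^esub> b) = \<Phi> a \<circ> \<Phi> b) \<and>
     smooth_map (prod_atlas AG AH) AH (\<lambda>(a, p). \<Phi> a p) \<and>
     (\<forall>p q. \<Phi> (t p) q = p \<otimes>\<^bsub>H\<^esub> q \<otimes>\<^bsub>H\<^esub> inv\<^bsub>H\<^esub> p) \<and>
     (\<forall>a p. t (\<Phi> a p) = a \<otimes>\<^bsub>G\<^esub> t p \<otimes>\<^bsub>G\<^esub> inv\<^bsub>G\<^esub> a)"

definition rb_group ::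
  "('g::{t2_space, second_countable_topology}) monoid \<Rightarrow> ('g set \<times> ('g \<Rightarrow> 'e::euclidean_space)) set \<Rightarrow>
   ('g \<Rightarrow> 'g) \<Rightarrow> bool" where
  "rb_group G A \<B> \<longleftrightarrow> smooth_map A A \<B> \<and>
     (\<forall>a b. \<B> a \<otimes>\<^bsub>G\<^esub> \<B> b = \<B> (a \<otimes>\<^bsub>G\<^esub> \<B> a \<otimes>\<^bsub>G\<^esub> b \<otimes>\<^bsub>G\<^esub> inv\<^bsub>G\<^esub> (\<B> a)))"

definition rb_crossed_module ::
  "('h::{t2_space, second_countable_topology}) monoid \<Rightarrow> ('h set \<times> ('h \<Rightarrow> 'eh::euclidean_space)) set \<Rightarrow>
   ('g::{t2_space, second_countable_topology}) monoid \<Rightarrow> ('g set \<times> ('g \<Rightarrow> 'eg::euclidean_space)) set \<Rightarrow>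
   ('h \<Rightarrow> 'g) \<Rightarrow> ('g \<Rightarrow> 'h \<Rightarrow> 'h) \<Rightarrow> ('h \<Rightarrow> 'h) \<Rightarrow> ('g \<Rightarrow> 'g) \<Rightarrow> bool" where
  "rb_crossed_module H AH G AG t \<Phi> \<B>1 \<B>0 \<longleftrightarrow>
     rb_group H AH \<B>1 \<and> rb_group G AG \<B>0 \<and> t \<circ> \<B>1 = \<B>0 \<circ> t \<and>
     (\<forall>a p. \<Phi> (\<B>0 a) (\<B>1 p) =
        \<B>1 (\<Phi> (a \<otimes>\<^bsub>G\<^esub> \<B>0 a) (p \<otimes>\<^bsub>H\<^esub> \<B>1 p) \<otimes>\<^bsub>H\<^esub> \<Phi> (\<B>0 a) (inv\<^bsub>H\<^esub> (\<B>1 p))))"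

text \<open>The tangent space at the identity is identified with the model space of a chart (U, c)
  with e in U; x corresponds to the velocity at 0 of the curve s \<mapsto> c^{-1}(c e + s x).\<close>
definition chart_curve :: "'m set \<Rightarrow> ('m \<Rightarrow> 'e::real_vector) \<Rightarrow> 'm \<Rightarrow> 'e \<Rightarrow> real \<Rightarrow> 'm" where
  "chart_curve U c e x = (\<lambda>s. inv_into U c (c e + s *\<^sub>R x))"

definition mixed2 :: "(real \<Rightarrow> real \<Rightarrow> 'e::real_normed_vector) \<Rightarrow> 'e" where
  "mixed2 F = vector_derivative (\<lambda>s. vector_derivative (\<lambda>r. F s r) (at 0)) (at 0)"

definition lie_bracket :: "'g monoid \<Rightarrow> 'g set \<Rightarrow> ('g \<Rightarrow> 'e::euclidean_space) \<Rightarrow> 'e \<Rightarrow> 'e \<Rightarrow> 'e" where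
  "lie_bracket G U c x y = mixed2 (\<lambda>s r.
     c (chart_curve U c \<one>\<^bsub>G\<^esub> x s \<otimes>\<^bsub>G\<^esub> chart_curve U c \<one>\<^bsub>G\<^esub> y r \<otimes>\<^bsub>G\<^esub>
        inv\<^bsub>G\<^esub> (chart_curve U c \<one>\<^bsub>G\<^esub> x s)))"

definition lie_diff :: "'m set \<Rightarrow> ('m \<Rightarrow> 'e::euclidean_space) \<Rightarrow> 'm \<Rightarrow> ('m \<Rightarrow> 'n) \<Rightarrow> ('n \<Rightarrow> 'f::euclidean_space)
     \<Rightarrow> 'e \<Rightarrow> 'f" where
  "lie_diff U c e f d = frechet_derivative (d \<circ> f \<circ> inv_into U c) (at (c e))"

definition lie_action ::
  "'g monoid \<Rightarrow> 'g set \<Rightarrow> ('g \<Rightarrow> 'eg::euclidean_space) \<Rightarrow>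
   'h monoid \<Rightarrow> 'h set \<Rightarrow> ('h \<Rightarrow> 'eh::euclidean_space) \<Rightarrow> ('g \<Rightarrow> 'h \<Rightarrow> 'h) \<Rightarrow> 'eg \<Rightarrow> 'eh \<Rightarrow> 'eh" where
  "lie_action G UG cG H UH cH \<Phi> x u = mixed2 (\<lambda>s r.
     cH (\<Phi> (chart_curve UG cG \<one>\<^bsub>G\<^esub> x s) (chart_curve UH cH \<one>\<^bsub>H\<^esub> u r)))"

definition rb_lie :: "('e::real_vector \<Rightarrow> 'e \<Rightarrow> 'e) \<Rightarrow> ('e \<Rightarrow> 'e) \<Rightarrow> bool" where
  "rb_lie br B \<longleftrightarrow> linear B \<and>
     (\<forall>x y. br (B x) (B y) = B (br (B x) y + br x (B y) + br x y))"

definition rb_lie_crossed_module ::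
  "('eh::real_vector \<Rightarrow> 'eh \<Rightarrow> 'eh) \<Rightarrow> ('eg::real_vector \<Rightarrow> 'eg \<Rightarrow> 'eg) \<Rightarrow> ('eh \<Rightarrow> 'eg) \<Rightarrow>
   ('eg \<Rightarrow> 'eh \<Rightarrow> 'eh) \<Rightarrow> ('eh \<Rightarrow> 'eh) \<Rightarrow> ('eg \<Rightarrow> 'eg) \<Rightarrow> bool" where
  "rb_lie_crossed_module brh brg dt \<phi> B1 B0 \<longleftrightarrow>
     rb_lie brh B1 \<and> rb_lie brg B0 \<and> dt \<circ> B1 = B0 \<circ> dt \<and>
     (\<forall>x u. \<phi> (B0 x) (B1 u) = B1 (\<phi> x (B1 u) + \<phi> (B0 x) u + \<phi> x u))"

end

theory Submission
  imports Defs
begin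

lemma chart_facts:
  assumes "smooth_atlas A" "(U, c) \<in> A"
  shows "open U" "open (c ` U)" "continuous_on U c" "continuous_on (c ` U) (inv_into U c)"
    "\<And>x. x \<in> U \<Longrightarrow> inv_into U c (c x) = x" "\<And>y. y \<in> c ` U \<Longrightarrow> c (inv_into U c y) = y"
    "inj_on c U"
proof -
  have "is_chart (U, c)" using assms unfolding smooth_atlas_def by blast
  hence h: "open U" "open (c ` U)" "homeomorphism U (c ` U) c (inv_into U c)"
    unfolding is_chart_def by auto
  show "open U" "open (c ` U)" using h by auto
  show "continuous_on U c" "continuous_on (c ` U) (inv_into U c)"
    using h(3) unfolding homeomorphism_def by auto
  show i: "\<And>x. x \<in> U \<Longrightarrow> inv_into U c (c x) = x"
    using h(3) unfolding homeomorphism_def by auto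
  show "\<And>y. y \<in> c ` U \<Longrightarrow> c (inv_into U c y) = y"
    using h(3) unfolding homeomorphism_def by auto
  show "inj_on c U" using i by (metis inj_on_inverseI)
qed

lemma smooth_on_diff1:
  assumes "smooth_on S f" "x \<in> S" shows "f differentiable (at x)"
proof -
  have "Ck_on (Suc 0) S f" using assms(1) unfolding smooth_on_def by blast
  thus ?thesis using assms(2) by simp
qed

lemma smooth_on_diff2:
  assumes "smooth_on S f" "x \<in> S" shows "(\<lambda>z. frechet_derivative f (at z) v) differentiable (at x)"
proof -
  have "Ck_on (Suc (Suc 0)) S f" using assms(1) unfolding smooth_on_def by blast
  thus ?thesis using assms(2) by simp
qed

lemma smooth_on_open: "smooth_on S f \<Longrightarrow> open S"
  unfolding smooth_on_def by blast

lemma smooth_mapD: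
  assumes "smooth_map A A' f" "(U, c) \<in> A" "(V, d) \<in> A'"
  shows "smooth_on (c ` (U \<inter> f -` V)) (d \<circ> f \<circ> inv_into U c)"
  using assms unfolding smooth_map_def by blast

lemma smooth_map_cont: "smooth_map A A' f \<Longrightarrow> continuous_on UNIV f"
  unfolding smooth_map_def by blast

lemma prod_atlasI: "(U, c) \<in> A \<Longrightarrow> (V, d) \<in> B \<Longrightarrow> (U \<times> V, \<lambda>(x, y). (c x, d y)) \<in> prod_atlas A B"
  unfolding prod_atlas_def by blast

lemma inv_into_prod:
  assumes "inj_on c U" "inj_on d V" "x \<in> U" "y \<in> V"
  shows "inv_into (U \<times> V) (\<lambda>(x, y). (c x, d y)) (c x, d y) = (x, y)"
proof -
  have "inj_on (\<lambda>(x, y). (c x, d y)) (U \<times> V)"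
    using assms(1,2) unfolding inj_on_def by auto
  from inv_into_f_f[OF this, of "(x,y)"] assms(3,4) show ?thesis by simp
qed

definition vel :: "('m::topological_space \<Rightarrow> 'e::real_normed_vector) \<Rightarrow> 'm \<Rightarrow> (real \<Rightarrow> 'm) \<Rightarrow> 'e \<Rightarrow> bool" where
  "vel c e p v \<longleftrightarrow> p 0 = e \<and> continuous (at 0) p \<and> ((\<lambda>r. c (p r)) has_vector_derivative v) (at 0)"

lemma vel_unique: "vel c e p v \<Longrightarrow> vel c e p w \<Longrightarrow> v = w"
  unfolding vel_def using vector_derivative_unique_at by blast

lemma vel_const: "vel c e (\<lambda>r. e) 0"
  unfolding vel_def by (auto intro: has_vector_derivative_const)

lemma ev_in:
  assumes "continuous (at 0) p" "open U" "p 0 \<in> U"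
  shows "\<forall>\<^sub>F r in nhds 0. p r \<in> U"
proof -
  have "\<forall>\<^sub>F r in at 0. p r \<in> U"
    using assms unfolding continuous_at by (simp add: tendsto_def)
  thus ?thesis using assms(3) by (simp add: eventually_nhds_conv_at)
qed

lemma vd_cong_ev:
  assumes "(f has_vector_derivative v) (at x)" "\<forall>\<^sub>F y in nhds x. f y = g y"
  shows "(g has_vector_derivative v) (at x)"
proof -
  have "g x = f x" using assms(2) by (simp add: eventually_nhds_conv_at)
  have "(f has_vector_derivative v) (at x within UNIV) = (g has_vector_derivative v) (at x within UNIV)"
    by (rule has_vector_derivative_cong_ev) (use assms(2) \<open>g x = f x\<close> in \<open>auto elim: eventually_mono\<close>)
  thus ?thesis using assms(1) by simp
qed

lemma vd_chain:
  assumes "(k has_vector_derivative v) (at x)" "f differentiable (at (k x))"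
  shows "((\<lambda>y. f (k y)) has_vector_derivative (frechet_derivative f (at (k x)) v)) (at x)"
proof -
  have "(f has_derivative frechet_derivative f (at (k x))) (at (k x) within k ` UNIV)"
    using assms(2) frechet_derivative_works has_derivative_at_withinI by blast
  from vector_derivative_diff_chain_within[OF assms(1) this]
  show ?thesis by (simp add: o_def)
qed

lemma MX:
  assumes "\<forall>\<^sub>F s in nhds 0. vel c e (P s) (V s)" "(V has_vector_derivative z) (at 0)"
  shows "mixed2 (\<lambda>s r. c (P s r)) = z"
proof -
  have "\<forall>\<^sub>F s in nhds 0. V s = vector_derivative (\<lambda>r. c (P s r)) (at 0)"
    using assms(1) by (rule eventually_mono) (auto simp: vel_def vector_derivative_at)
  from vd_cong_ev[OF assms(2) this] show ?thesis
    unfolding mixed2_def by (rule vector_derivative_at)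
qed

lemma vel_chart_curve:
  assumes "smooth_atlas A" "(U, c) \<in> A" "e \<in> U"
  shows "vel c e (chart_curve U c e v) v"
proof -
  note cf = chart_facts[OF assms(1,2)]
  have ceU: "c e \<in> c ` U" using assms(3) by blast
  have lin: "\<forall>\<^sub>F s in nhds 0. c e + s *\<^sub>R v \<in> c ` U"
    by (rule ev_in[where p="\<lambda>s. c e + s *\<^sub>R v"]) (use cf(2) ceU in \<open>auto intro!: continuous_intros\<close>)
  have "chart_curve U c e v 0 = e" unfolding chart_curve_def using cf(5) assms(3) by simp
  moreover have "continuous (at 0) (chart_curve U c e v)"
  proof -
    have "isCont (inv_into U c) (c e + 0 *\<^sub>R v)"
      using cf(4) cf(2) ceU continuous_on_eq_continuous_at by fastforce
    hence "isCont (inv_into U c \<circ> (\<lambda>s. c e + s *\<^sub>R v)) 0"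
      by (intro continuous_at_compose) (auto intro!: continuous_intros)
    thus ?thesis unfolding chart_curve_def o_def by simp
  qed
  moreover have "((\<lambda>r. c (chart_curve U c e v r)) has_vector_derivative v) (at 0)"
  proof (rule vd_cong_ev)
    show "((\<lambda>r. c e + r *\<^sub>R v) has_vector_derivative v) (at 0)"
      by (auto intro!: derivative_eq_intros)
    show "\<forall>\<^sub>F y in nhds 0. c e + y *\<^sub>R v = c (chart_curve U c e v y)"
      using lin by (rule eventually_mono) (simp add: chart_curve_def cf(6))
  qed
  ultimately show ?thesis unfolding vel_def by blast
qed

lemma vel_map:
  fixes f :: "'m::t2_space \<Rightarrow> 'n::t2_space" and c :: "'m \<Rightarrow> 'e::euclidean_space"
    and d :: "'n \<Rightarrow> 'f::euclidean_space"
  assumes "smooth_atlas A" "smooth_atlas A'" "smooth_map A A' f" "(U, c) \<in> A" "e \<in> U"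
    "(V, d) \<in> A'" "f e = e'" "e' \<in> V" "vel c e p v"
  shows "vel d e' (\<lambda>r. f (p r)) (lie_diff U c e f d v)"
proof -
  note cf = chart_facts[OF assms(1,4)]
  note df = chart_facts[OF assms(2,6)]
  have p0: "p 0 = e" and pc: "continuous (at 0) p" and pd: "((\<lambda>r. c (p r)) has_vector_derivative v) (at 0)"
    using assms(9) unfolding vel_def by auto
  have fc: "isCont f x" for x using smooth_map_cont[OF assms(3)]
    by (simp add: continuous_on_eq_continuous_at)
  have fpc: "continuous (at 0) (\<lambda>r. f (p r))"
    using continuous_at_compose[OF pc fc[of "p 0"]] by (simp add: o_def)
  have ev1: "\<forall>\<^sub>F r in nhds 0. p r \<in> U" by (rule ev_in[OF pc cf(1)]) (simp add: p0 assms(5))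
  have ev2: "\<forall>\<^sub>F r in nhds 0. f (p r) \<in> V" by (rule ev_in[OF fpc df(1)]) (simp add: p0 assms(7,8))
  let ?L = "d \<circ> f \<circ> inv_into U c"
  have sm: "smooth_on (c ` (U \<inter> f -` V)) ?L" by (rule smooth_mapD[OF assms(3,4,6)])
  have "c e \<in> c ` (U \<inter> f -` V)" using assms(5,7,8) by auto
  hence Ld: "?L differentiable (at (c e))" by (rule smooth_on_diff1[OF sm])
  have Ld': "?L differentiable (at (c (p 0)))" using Ld p0 by simp
  have "((\<lambda>r. ?L (c (p r))) has_vector_derivative frechet_derivative ?L (at (c (p 0))) v) (at 0)"
    by (rule vd_chain[OF pd Ld'])
  hence "((\<lambda>r. ?L (c (p r))) has_vector_derivative frechet_derivative ?L (at (c e)) v) (at 0)"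
    unfolding p0 .
  hence "((\<lambda>r. d (f (p r))) has_vector_derivative lie_diff U c e f d v) (at 0)"
    unfolding lie_diff_def
  proof (rule vd_cong_ev)
    show "\<forall>\<^sub>F r in nhds 0. ?L (c (p r)) = d (f (p r))"
      using eventually_conj[OF ev1 ev2] by (rule eventually_mono) (simp add: cf(5))
  qed
  thus ?thesis unfolding vel_def using p0 assms(7) fpc by blast
qed

definition loc2 where
  "loc2 U1 c1 U2 c2 c3 F = c3 \<circ> F \<circ> inv_into (U1 \<times> U2) (\<lambda>(x, y). (c1 x, c2 y))"

lemma loc2_eq:
  assumes "inj_on c1 U1" "inj_on c2 U2" "x \<in> U1" "y \<in> U2"
  shows "loc2 U1 c1 U2 c2 c3 F (c1 x, c2 y) = c3 (F (x, y))"
  unfolding loc2_def using inv_into_prod[OF assms] by simp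

lemma loc2_smooth:
  assumes "smooth_map (prod_atlas A1 A2) A3 F" "(U1, c1) \<in> A1" "(U2, c2) \<in> A2" "(U3, c3) \<in> A3"
  shows "smooth_on ((\<lambda>(x, y). (c1 x, c2 y)) ` ((U1 \<times> U2) \<inter> F -` U3)) (loc2 U1 c1 U2 c2 c3 F)"
  unfolding loc2_def by (rule smooth_mapD[OF assms(1) prod_atlasI[OF assms(2,3)] assms(4)])

lemma vel_map2:
  fixes F :: "'m::t2_space \<times> 'n::t2_space \<Rightarrow> 'k::t2_space" and c1 :: "'m \<Rightarrow> 'e1::euclidean_space"
    and c2 :: "'n \<Rightarrow> 'e2::euclidean_space" and c3 :: "'k \<Rightarrow> 'e3::euclidean_space"
  assumes "smooth_atlas A1" "smooth_atlas A2" "smooth_atlas A3" "smooth_map (prod_atlas A1 A2) A3 F"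
    "(U1, c1) \<in> A1" "(U2, c2) \<in> A2" "(U3, c3) \<in> A3" "e1 \<in> U1" "e2 \<in> U2" "F (e1, e2) = e3" "e3 \<in> U3"
    "vel c1 e1 p u" "vel c2 e2 q w"
  shows "vel c3 e3 (\<lambda>r. F (p r, q r))
           (frechet_derivative (loc2 U1 c1 U2 c2 c3 F) (at (c1 e1, c2 e2)) (u, w))"
proof -
  note f1 = chart_facts[OF assms(1,5)]
  note f2 = chart_facts[OF assms(2,6)]
  note f3 = chart_facts[OF assms(3,7)]
  have p0: "p 0 = e1" and pc: "continuous (at 0) p" and pd: "((\<lambda>r. c1 (p r)) has_vector_derivative u) (at 0)"
    using assms(12) unfolding vel_def by auto
  have q0: "q 0 = e2" and qc: "continuous (at 0) q" and qd: "((\<lambda>r. c2 (q r)) has_vector_derivative w) (at 0)"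
    using assms(13) unfolding vel_def by auto
  have fc: "isCont F x" for x using smooth_map_cont[OF assms(4)]
    continuous_on_eq_continuous_at open_UNIV UNIV_I by blast
  have pqc: "continuous (at 0) (\<lambda>r. (p r, q r))" using pc qc by (rule continuous_Pair)
  have fpc: "continuous (at 0) (\<lambda>r. F (p r, q r))"
    using continuous_at_compose[OF pqc fc] by (simp add: o_def)
  have ev1: "\<forall>\<^sub>F r in nhds 0. p r \<in> U1" by (rule ev_in[OF pc f1(1)]) (simp add: p0 assms(8))
  have ev2: "\<forall>\<^sub>F r in nhds 0. q r \<in> U2" by (rule ev_in[OF qc f2(1)]) (simp add: q0 assms(9))
  have ev3: "\<forall>\<^sub>F r in nhds 0. F (p r, q r) \<in> U3" by (rule ev_in[OF fpc f3(1)]) (simp add: p0 q0 assms(10,11))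
  let ?L = "loc2 U1 c1 U2 c2 c3 F"
  have sm: "smooth_on ((\<lambda>(x, y). (c1 x, c2 y)) ` ((U1 \<times> U2) \<inter> F -` U3)) ?L"
    by (rule loc2_smooth[OF assms(4-7)])
  have "(c1 e1, c2 e2) \<in> (\<lambda>(x, y). (c1 x, c2 y)) ` ((U1 \<times> U2) \<inter> F -` U3)"
    using assms(8-11) by force
  hence Ld: "?L differentiable (at (c1 e1, c2 e2))" by (rule smooth_on_diff1[OF sm])
  have "((\<lambda>r. (c1 (p r), c2 (q r))) has_vector_derivative (u, w)) (at 0)"
    using pd qd by (rule has_vector_derivative_Pair)
  moreover have "?L differentiable (at (c1 (p 0), c2 (q 0)))" using Ld p0 q0 by simp
  ultimately have "((\<lambda>r. ?L (c1 (p r), c2 (q r))) has_vector_derivative frechet_derivative ?L (at (c1 (p 0), c2 (q 0))) (u, w)) (at 0)"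
    using vd_chain[of "\<lambda>r. (c1 (p r), c2 (q r))" "(u, w)" 0 ?L] by simp
  hence "((\<lambda>r. ?L (c1 (p r), c2 (q r))) has_vector_derivative frechet_derivative ?L (at (c1 e1, c2 e2)) (u, w)) (at 0)"
    unfolding p0 q0 .
  hence "((\<lambda>r. c3 (F (p r, q r))) has_vector_derivative frechet_derivative ?L (at (c1 e1, c2 e2)) (u, w)) (at 0)"
  proof (rule vd_cong_ev)
    show "\<forall>\<^sub>F r in nhds 0. ?L (c1 (p r), c2 (q r)) = c3 (F (p r, q r))"
      using eventually_conj[OF ev1 ev2] by (rule eventually_mono) (simp add: loc2_eq f1(7) f2(7))
  qed
  thus ?thesis unfolding vel_def using p0 q0 assms(10) fpc by blast
qed

lemma DD:
  fixes f :: "'a::euclidean_space \<Rightarrow> 'b::real_normed_vector"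
    and \<sigma> :: "'c::real_normed_vector \<Rightarrow> 'a" and \<tau> :: "'c \<Rightarrow> 'a"
  assumes "\<sigma> differentiable (at p)" "\<tau> differentiable (at p)"
    "\<forall>\<^sub>F z in nhds (\<sigma> p). f differentiable (at z)"
    "\<And>w. (\<lambda>z. frechet_derivative f (at z) w) differentiable (at (\<sigma> p))"
  shows "(\<lambda>q. frechet_derivative f (at (\<sigma> q)) (\<tau> q)) differentiable (at p)"
proof -
  define G where "G q = (\<Sum>b\<in>Basis. (\<tau> q \<bullet> b) *\<^sub>R frechet_derivative f (at (\<sigma> q)) b)" for q
  have Gd: "G differentiable (at p)"
    unfolding G_def
  proof (intro differentiable_sum ballI differentiable_scaleR)
    fix b :: 'a assume "b \<in> Basis"
    show "(\<lambda>q. \<tau> q \<bullet> b) differentiable (at p)"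
      using assms(2) by (intro differentiable_inner) auto
    show "(\<lambda>q. frechet_derivative f (at (\<sigma> q)) b) differentiable (at p)"
      using differentiable_chain_at[OF assms(1) assms(4)[of b]] by (simp add: o_def)
  qed simp
  have sc: "isCont \<sigma> p" using assms(1) differentiable_imp_continuous_within by blast
  have "\<forall>\<^sub>F q in nhds p. f differentiable (at (\<sigma> q))"
  proof -
    have "filterlim \<sigma> (nhds (\<sigma> p)) (at p)" using continuous_at[THEN iffD1, OF sc] .
    from eventually_compose_filterlim[OF assms(3) this]
    have "\<forall>\<^sub>F q in at p. f differentiable (at (\<sigma> q))" .
    moreover have "f differentiable (at (\<sigma> p))" using assms(3) eventually_nhds_x_imp_x by blast
    ultimately show ?thesis by (simp add: eventually_nhds_conv_at)
  qed
  hence ev: "\<forall>\<^sub>F q in nhds p. G q = frechet_derivative f (at (\<sigma> q)) (\<tau> q)"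
  proof (rule eventually_mono)
    fix q assume "f differentiable (at (\<sigma> q))"
    hence l: "linear (frechet_derivative f (at (\<sigma> q)))" by (rule linear_frechet_derivative)
    have "frechet_derivative f (at (\<sigma> q)) (\<tau> q) =
          frechet_derivative f (at (\<sigma> q)) (\<Sum>b\<in>Basis. (\<tau> q \<bullet> b) *\<^sub>R b)"
      by (simp add: euclidean_representation)
    also have "\<dots> = G q" unfolding G_def using l by (simp add: linear_sum linear.scaleR)
    finally show "G q = frechet_derivative f (at (\<sigma> q)) (\<tau> q)" by simp
  qed
  obtain G' where "(G has_derivative G') (at p)" using Gd unfolding differentiable_def by blast
  moreover have "\<forall>\<^sub>F x' in at p. G x' = frechet_derivative f (at (\<sigma> x')) (\<tau> x')"
    using ev by (simp add: eventually_nhds_conv_at)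
  moreover have "G p = frechet_derivative f (at (\<sigma> p)) (\<tau> p)"
    using ev by (simp add: eventually_nhds_conv_at)
  ultimately have "((\<lambda>q. frechet_derivative f (at (\<sigma> q)) (\<tau> q)) has_derivative G') (at p)"
    using has_derivative_transform_eventually[of G G' p UNIV] by auto
  thus ?thesis unfolding differentiable_def by blast
qed



locale LG =
  fixes G :: "('g::{t2_space, second_countable_topology}) monoid"
    and A :: "('g set \<times> ('g \<Rightarrow> 'e::euclidean_space)) set"
    and U :: "'g set" and c :: "'g \<Rightarrow> 'e"
  assumes lg: "lie_group G A" and ch: "(U, c) \<in> A" and one: "\<one>\<^bsub>G\<^esub> \<in> U"
begin

lemma grp: "group G" and carr: "carrier G = UNIV" and atl: "smooth_atlas A"
  and msm: "smooth_map (prod_atlas A A) A (\<lambda>(x, y). x \<otimes>\<^bsub>G\<^esub> y)"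
  and ism: "smooth_map A A (\<lambda>x. inv\<^bsub>G\<^esub> x)"
  using lg unfolding lie_group_def by auto

lemmas cf = chart_facts[OF atl ch]

lemma gsimps:
  "x \<otimes>\<^bsub>G\<^esub> (inv\<^bsub>G\<^esub> x \<otimes>\<^bsub>G\<^esub> y) = y"
  "inv\<^bsub>G\<^esub> x \<otimes>\<^bsub>G\<^esub> (x \<otimes>\<^bsub>G\<^esub> y) = y"
  "x \<otimes>\<^bsub>G\<^esub> inv\<^bsub>G\<^esub> x = \<one>\<^bsub>G\<^esub>"
  "inv\<^bsub>G\<^esub> x \<otimes>\<^bsub>G\<^esub> x = \<one>\<^bsub>G\<^esub>"
  "x \<otimes>\<^bsub>G\<^esub> \<one>\<^bsub>G\<^esub> = x" "\<one>\<^bsub>G\<^esub> \<otimes>\<^bsub>G\<^esub> x = x"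
  "(x \<otimes>\<^bsub>G\<^esub> y) \<otimes>\<^bsub>G\<^esub> z = x \<otimes>\<^bsub>G\<^esub> (y \<otimes>\<^bsub>G\<^esub> z)"
  "inv\<^bsub>G\<^esub> (x \<otimes>\<^bsub>G\<^esub> y) = inv\<^bsub>G\<^esub> y \<otimes>\<^bsub>G\<^esub> inv\<^bsub>G\<^esub> x"
  "inv\<^bsub>G\<^esub> (inv\<^bsub>G\<^esub> x) = x" "inv\<^bsub>G\<^esub> \<one>\<^bsub>G\<^esub> = \<one>\<^bsub>G\<^esub>"
proof -
  interpret group G by (rule grp)
  show "x \<otimes>\<^bsub>G\<^esub> (inv\<^bsub>G\<^esub> x \<otimes>\<^bsub>G\<^esub> y) = y" by (simp add: carr m_assoc[symmetric])
  show "inv\<^bsub>G\<^esub> x \<otimes>\<^bsub>G\<^esub> (x \<otimes>\<^bsub>G\<^esub> y) = y" by (simp add: carr m_assoc[symmetric])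
  show "x \<otimes>\<^bsub>G\<^esub> inv\<^bsub>G\<^esub> x = \<one>\<^bsub>G\<^esub>"
    "inv\<^bsub>G\<^esub> x \<otimes>\<^bsub>G\<^esub> x = \<one>\<^bsub>G\<^esub>"
    "x \<otimes>\<^bsub>G\<^esub> \<one>\<^bsub>G\<^esub> = x" "\<one>\<^bsub>G\<^esub> \<otimes>\<^bsub>G\<^esub> x = x"
    "(x \<otimes>\<^bsub>G\<^esub> y) \<otimes>\<^bsub>G\<^esub> z = x \<otimes>\<^bsub>G\<^esub> (y \<otimes>\<^bsub>G\<^esub> z)"
    "inv\<^bsub>G\<^esub> (x \<otimes>\<^bsub>G\<^esub> y) = inv\<^bsub>G\<^esub> y \<otimes>\<^bsub>G\<^esub> inv\<^bsub>G\<^esub> x"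
    "inv\<^bsub>G\<^esub> (inv\<^bsub>G\<^esub> x) = x" "inv\<^bsub>G\<^esub> \<one>\<^bsub>G\<^esub> = \<one>\<^bsub>G\<^esub>"
    by (simp_all add: carr m_assoc inv_mult_group)
qed

definition mt where "mt = loc2 U c U c c (\<lambda>(x, y). x \<otimes>\<^bsub>G\<^esub> y)"
definition it where "it = c \<circ> (\<lambda>x. inv\<^bsub>G\<^esub> x) \<circ> inv_into U c"

lemma mt_smooth: "smooth_on ((\<lambda>(x, y). (c x, c y)) ` ((U \<times> U) \<inter> (\<lambda>(x, y). x \<otimes>\<^bsub>G\<^esub> y) -` U)) mt"
  unfolding mt_def by (rule loc2_smooth[OF msm ch ch ch])

lemma mt_dom: "x \<in> U \<Longrightarrow> y \<in> U \<Longrightarrow> x \<otimes>\<^bsub>G\<^esub> y \<in> U \<Longrightarrow>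
   (c x, c y) \<in> (\<lambda>(x, y). (c x, c y)) ` ((U \<times> U) \<inter> (\<lambda>(x, y). x \<otimes>\<^bsub>G\<^esub> y) -` U)"
  by force

lemma it_smooth: "smooth_on (c ` (U \<inter> (\<lambda>x. inv\<^bsub>G\<^esub> x) -` U)) it"
  unfolding it_def by (rule smooth_mapD[OF ism ch ch])

lemma it_eq: "x \<in> U \<Longrightarrow> it (c x) = c (inv\<^bsub>G\<^esub> x)"
  unfolding it_def using cf(5) by simp

lemma vel_mult_gen:
  assumes "x \<in> U" "y \<in> U" "x \<otimes>\<^bsub>G\<^esub> y \<in> U" "vel c x p u" "vel c y q w"
  shows "vel c (x \<otimes>\<^bsub>G\<^esub> y) (\<lambda>r. p r \<otimes>\<^bsub>G\<^esub> q r) (frechet_derivative mt (at (c x, c y)) (u, w))"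
proof -
  have "(\<lambda>(x, y). x \<otimes>\<^bsub>G\<^esub> y) (x, y) = x \<otimes>\<^bsub>G\<^esub> y" by simp
  from vel_map2[OF atl atl atl msm ch ch ch assms(1,2) this assms(3,4,5)] show ?thesis
    unfolding mt_def by simp
qed

lemma vel_chart: "vel c \<one>\<^bsub>G\<^esub> (chart_curve U c \<one>\<^bsub>G\<^esub> v) v"
  by (rule vel_chart_curve[OF atl ch one])

lemma vel_mult:
  assumes "vel c \<one>\<^bsub>G\<^esub> p u" "vel c \<one>\<^bsub>G\<^esub> q w"
  shows "vel c \<one>\<^bsub>G\<^esub> (\<lambda>r. p r \<otimes>\<^bsub>G\<^esub> q r) (u + w)"
proof -
  let ?D = "frechet_derivative mt (at (c \<one>\<^bsub>G\<^esub>, c \<one>\<^bsub>G\<^esub>))"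
  have o: "\<one>\<^bsub>G\<^esub> \<otimes>\<^bsub>G\<^esub> \<one>\<^bsub>G\<^esub> \<in> U" using one by (simp add: gsimps)
  have "mt differentiable (at (c \<one>\<^bsub>G\<^esub>, c \<one>\<^bsub>G\<^esub>))"
    by (rule smooth_on_diff1[OF mt_smooth mt_dom[OF one one o]])
  hence lin: "linear ?D" by (rule linear_frechet_derivative)
  have d1: "?D (a, 0) = a" for a
  proof -
    have "vel c \<one>\<^bsub>G\<^esub> (\<lambda>r. chart_curve U c \<one>\<^bsub>G\<^esub> a r \<otimes>\<^bsub>G\<^esub> \<one>\<^bsub>G\<^esub>) (?D (a, 0))"
      using vel_mult_gen[OF one one o vel_chart vel_const] by (simp add: gsimps)
    hence "vel c \<one>\<^bsub>G\<^esub> (chart_curve U c \<one>\<^bsub>G\<^esub> a) (?D (a, 0))" by (simp add: gsimps)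
    thus ?thesis using vel_chart vel_unique by blast
  qed
  have d2: "?D (0, a) = a" for a
  proof -
    have "vel c \<one>\<^bsub>G\<^esub> (\<lambda>r. \<one>\<^bsub>G\<^esub> \<otimes>\<^bsub>G\<^esub> chart_curve U c \<one>\<^bsub>G\<^esub> a r) (?D (0, a))"
      using vel_mult_gen[OF one one o vel_const vel_chart] by (simp add: gsimps)
    hence "vel c \<one>\<^bsub>G\<^esub> (chart_curve U c \<one>\<^bsub>G\<^esub> a) (?D (0, a))" by (simp add: gsimps)
    thus ?thesis using vel_chart vel_unique by blast
  qed
  have "?D (u, w) = ?D (u, 0) + ?D (0, w)"
    using linear_add[OF lin, of "(u, 0)" "(0, w)"] by simp
  hence "?D (u, w) = u + w" using d1 d2 by simp
  with vel_mult_gen[OF one one o assms] show ?thesis by (simp add: gsimps)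
qed

lemma vel_inv:
  assumes "vel c \<one>\<^bsub>G\<^esub> p v"
  shows "vel c \<one>\<^bsub>G\<^esub> (\<lambda>r. inv\<^bsub>G\<^esub> (p r)) (- v)"
proof -
  let ?L = "lie_diff U c \<one>\<^bsub>G\<^esub> (\<lambda>x. inv\<^bsub>G\<^esub> x) c v"
  have vi: "vel c \<one>\<^bsub>G\<^esub> (\<lambda>r. inv\<^bsub>G\<^esub> (p r)) ?L"
    by (rule vel_map[OF atl atl ism ch one ch _ one assms]) (simp add: gsimps)
  have "vel c \<one>\<^bsub>G\<^esub> (\<lambda>r. p r \<otimes>\<^bsub>G\<^esub> inv\<^bsub>G\<^esub> (p r)) (v + ?L)"
    by (rule vel_mult[OF assms vi])
  hence "vel c \<one>\<^bsub>G\<^esub> (\<lambda>r. \<one>\<^bsub>G\<^esub>) (v + ?L)" by (simp add: gsimps)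
  hence "v + ?L = 0" using vel_const vel_unique by blast
  hence "?L = - v" by (simp add: eq_neg_iff_add_eq_0 add.commute)
  thus ?thesis using vi by simp
qed


definition AdK where
  "AdK k v = frechet_derivative mt (at (k, it k)) (frechet_derivative mt (at (k, c \<one>\<^bsub>G\<^esub>)) (0, v), 0)"

definition br where "br x y = frechet_derivative (\<lambda>k. AdK k y) (at (c \<one>\<^bsub>G\<^esub>)) x"

lemma vel_conj:
  assumes "g \<in> U" "inv\<^bsub>G\<^esub> g \<in> U" "vel c \<one>\<^bsub>G\<^esub> p v"
  shows "vel c \<one>\<^bsub>G\<^esub> (\<lambda>r. g \<otimes>\<^bsub>G\<^esub> p r \<otimes>\<^bsub>G\<^esub> inv\<^bsub>G\<^esub> g) (AdK (c g) v)"
proof -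
  have a: "g \<otimes>\<^bsub>G\<^esub> \<one>\<^bsub>G\<^esub> \<in> U" using assms(1) by (simp add: gsimps)
  have v1: "vel c g (\<lambda>r. g \<otimes>\<^bsub>G\<^esub> p r) (frechet_derivative mt (at (c g, c \<one>\<^bsub>G\<^esub>)) (0, v))"
    using vel_mult_gen[OF assms(1) one a vel_const assms(3)] by (simp add: gsimps)
  have b: "g \<otimes>\<^bsub>G\<^esub> inv\<^bsub>G\<^esub> g \<in> U" using one by (simp add: gsimps)
  have "vel c (g \<otimes>\<^bsub>G\<^esub> inv\<^bsub>G\<^esub> g) (\<lambda>r. g \<otimes>\<^bsub>G\<^esub> p r \<otimes>\<^bsub>G\<^esub> inv\<^bsub>G\<^esub> g)
     (frechet_derivative mt (at (c g, c (inv\<^bsub>G\<^esub> g))) (frechet_derivative mt (at (c g, c \<one>\<^bsub>G\<^esub>)) (0, v), 0))"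
    by (rule vel_mult_gen[OF assms(1,2) b v1 vel_const])
  thus ?thesis unfolding AdK_def using it_eq[OF assms(1)] by (simp add: gsimps)
qed

lemma AdK_diff: "(\<lambda>k. AdK k v) differentiable (at (c \<one>\<^bsub>G\<^esub>))"
proof -
  have o: "\<one>\<^bsub>G\<^esub> \<otimes>\<^bsub>G\<^esub> \<one>\<^bsub>G\<^esub> \<in> U" using one by (simp add: gsimps)
  note dom = mt_dom[OF one one o]
  have ite: "it (c \<one>\<^bsub>G\<^esub>) = c \<one>\<^bsub>G\<^esub>" using it_eq[OF one] by (simp add: gsimps)
  have itd: "it differentiable (at (c \<one>\<^bsub>G\<^esub>))"
    by (rule smooth_on_diff1[OF it_smooth]) (use one in \<open>auto simp: gsimps\<close>)
  show ?thesis unfolding AdK_def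
  proof (rule DD[where \<sigma>="\<lambda>k. (k, it k)" and \<tau>="\<lambda>k. (frechet_derivative mt (at (k, c \<one>\<^bsub>G\<^esub>)) (0, v), 0)"])
    show "(\<lambda>k. (k, it k)) differentiable (at (c \<one>\<^bsub>G\<^esub>))"
      using itd by (intro differentiable_Pair) auto
    have "(\<lambda>z. frechet_derivative mt (at z) (0, v)) differentiable (at (c \<one>\<^bsub>G\<^esub>, c \<one>\<^bsub>G\<^esub>))"
      by (rule smooth_on_diff2[OF mt_smooth dom])
    hence "((\<lambda>z. frechet_derivative mt (at z) (0, v)) \<circ> (\<lambda>k. (k, c \<one>\<^bsub>G\<^esub>))) differentiable (at (c \<one>\<^bsub>G\<^esub>))"
      by (intro differentiable_chain_at) auto
    thus "(\<lambda>k. (frechet_derivative mt (at (k, c \<one>\<^bsub>G\<^esub>)) (0, v), 0)) differentiable (at (c \<one>\<^bsub>G\<^esub>))"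
      by (intro differentiable_Pair) (auto simp: o_def)
    have "open ((\<lambda>(x, y). (c x, c y)) ` ((U \<times> U) \<inter> (\<lambda>(x, y). x \<otimes>\<^bsub>G\<^esub> y) -` U))"
      by (rule smooth_on_open[OF mt_smooth])
    thus "\<forall>\<^sub>F z in nhds (c \<one>\<^bsub>G\<^esub>, it (c \<one>\<^bsub>G\<^esub>)). mt differentiable (at z)"
      unfolding eventually_nhds ite using dom smooth_on_diff1[OF mt_smooth] by blast
    show "(\<lambda>z. frechet_derivative mt (at z) w) differentiable (at (c \<one>\<^bsub>G\<^esub>, it (c \<one>\<^bsub>G\<^esub>)))" for w
      unfolding ite by (rule smooth_on_diff2[OF mt_smooth dom])
  qed
qed

lemma inv_cont: "continuous (at x) (\<lambda>x. inv\<^bsub>G\<^esub> x)"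
  using smooth_map_cont[OF ism] continuous_on_eq_continuous_at open_UNIV UNIV_I by blast

lemma fam_conj:
  assumes "vel c \<one>\<^bsub>G\<^esub> g \<gamma>" "vel c \<one>\<^bsub>G\<^esub> p v"
  shows "\<forall>\<^sub>F s in nhds 0. vel c \<one>\<^bsub>G\<^esub> (\<lambda>r. g s \<otimes>\<^bsub>G\<^esub> p r \<otimes>\<^bsub>G\<^esub> inv\<^bsub>G\<^esub> (g s)) (AdK (c (g s)) v)"
    "((\<lambda>s. AdK (c (g s)) v) has_vector_derivative br \<gamma> v) (at 0)"
proof -
  have g0: "g 0 = \<one>\<^bsub>G\<^esub>" and gc: "continuous (at 0) g"
    and gd: "((\<lambda>s. c (g s)) has_vector_derivative \<gamma>) (at 0)" using assms(1) unfolding vel_def by auto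
  have igc: "continuous (at 0) (\<lambda>s. inv\<^bsub>G\<^esub> (g s))"
    using continuous_at_compose[OF gc inv_cont] by (simp add: o_def)
  have e1: "\<forall>\<^sub>F s in nhds 0. g s \<in> U" by (rule ev_in[OF gc cf(1)]) (simp add: g0 one)
  have e2: "\<forall>\<^sub>F s in nhds 0. inv\<^bsub>G\<^esub> (g s) \<in> U" by (rule ev_in[OF igc cf(1)]) (simp add: g0 one gsimps)
  show "\<forall>\<^sub>F s in nhds 0. vel c \<one>\<^bsub>G\<^esub> (\<lambda>r. g s \<otimes>\<^bsub>G\<^esub> p r \<otimes>\<^bsub>G\<^esub> inv\<^bsub>G\<^esub> (g s)) (AdK (c (g s)) v)"
    using eventually_conj[OF e1 e2] by (rule eventually_mono) (auto intro: vel_conj[OF _ _ assms(2)])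
  have "(\<lambda>k. AdK k v) differentiable (at (c (g 0)))" using AdK_diff g0 by simp
  from vd_chain[OF gd this] show "((\<lambda>s. AdK (c (g s)) v) has_vector_derivative br \<gamma> v) (at 0)"
    unfolding br_def g0 .
qed

lemma bracket_eq: "lie_bracket G U c x y = br x y"
  unfolding lie_bracket_def
  by (rule MX[OF fam_conj[OF vel_chart vel_chart]])

lemma br_add2: "br \<gamma> (v + w) = br \<gamma> v + br \<gamma> w"
proof -
  let ?g = "chart_curve U c \<one>\<^bsub>G\<^esub> \<gamma>" and ?p = "chart_curve U c \<one>\<^bsub>G\<^esub> v"
    and ?q = "chart_curve U c \<one>\<^bsub>G\<^esub> w"
  note f1 = fam_conj[OF vel_chart[of \<gamma>] vel_chart[of v]]
  note f2 = fam_conj[OF vel_chart[of \<gamma>] vel_chart[of w]]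
  note f3 = fam_conj[OF vel_chart[of \<gamma>] vel_mult[OF vel_chart[of v] vel_chart[of w]]]
  have "\<forall>\<^sub>F s in nhds 0. vel c \<one>\<^bsub>G\<^esub>
     (\<lambda>r. (?g s \<otimes>\<^bsub>G\<^esub> ?p r \<otimes>\<^bsub>G\<^esub> inv\<^bsub>G\<^esub> (?g s)) \<otimes>\<^bsub>G\<^esub> (?g s \<otimes>\<^bsub>G\<^esub> ?q r \<otimes>\<^bsub>G\<^esub> inv\<^bsub>G\<^esub> (?g s)))
     (AdK (c (?g s)) v + AdK (c (?g s)) w)"
    using eventually_conj[OF f1(1) f2(1)] by (rule eventually_mono) (auto intro: vel_mult)
  from MX[OF this has_vector_derivative_add[OF f1(2) f2(2)]]
  have "mixed2 (\<lambda>s r. c ((?g s \<otimes>\<^bsub>G\<^esub> ?p r \<otimes>\<^bsub>G\<^esub> inv\<^bsub>G\<^esub> (?g s)) \<otimes>\<^bsub>G\<^esub> (?g s \<otimes>\<^bsub>G\<^esub> ?q r \<otimes>\<^bsub>G\<^esub> inv\<^bsub>G\<^esub> (?g s))))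
      = br \<gamma> v + br \<gamma> w" .
  moreover have "mixed2 (\<lambda>s r. c (?g s \<otimes>\<^bsub>G\<^esub> (?p r \<otimes>\<^bsub>G\<^esub> ?q r) \<otimes>\<^bsub>G\<^esub> inv\<^bsub>G\<^esub> (?g s))) = br \<gamma> (v + w)"
    by (rule MX[OF f3])
  ultimately show ?thesis by (simp add: gsimps)
qed

lemma mixed2_const: "mixed2 (\<lambda>s r. c \<one>\<^bsub>G\<^esub>) = 0"
proof -
  have "\<forall>\<^sub>F s in nhds 0. vel c \<one>\<^bsub>G\<^esub> (\<lambda>r. \<one>\<^bsub>G\<^esub>) 0" using vel_const by simp
  from MX[OF this has_vector_derivative_const] show ?thesis .
qed

lemma br_zero2: "br \<gamma> 0 = 0"
proof -
  have "mixed2 (\<lambda>s r. c (chart_curve U c \<one>\<^bsub>G\<^esub> \<gamma> s \<otimes>\<^bsub>G\<^esub> \<one>\<^bsub>G\<^esub> \<otimes>\<^bsub>G\<^esub> inv\<^bsub>G\<^esub> (chart_curve U c \<one>\<^bsub>G\<^esub> \<gamma> s))) = br \<gamma> 0"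
    by (rule MX[OF fam_conj[OF vel_chart vel_const]])
  thus ?thesis using mixed2_const by (simp add: gsimps)
qed

lemma br_neg2: "br \<gamma> (- w) = - br \<gamma> w"
  using br_add2[of \<gamma> w "- w"] br_zero2[of \<gamma>] by (simp add: eq_neg_iff_add_eq_0 add.commute)

lemma br_lin1: "linear (\<lambda>x. br x y)"
  unfolding br_def using linear_frechet_derivative[OF AdK_diff] by (simp add: eta_contract_eq)

lemma br_add1: "br (x + x') y = br x y + br x' y"
  using linear_add[OF br_lin1] by blast


lemma rb_one: assumes "rb_group G A B" shows "B \<one>\<^bsub>G\<^esub> = \<one>\<^bsub>G\<^esub>"
proof -
  have rb: "B a \<otimes>\<^bsub>G\<^esub> B b = B (a \<otimes>\<^bsub>G\<^esub> B a \<otimes>\<^bsub>G\<^esub> b \<otimes>\<^bsub>G\<^esub> inv\<^bsub>G\<^esub> (B a))" for a b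
    using assms unfolding rb_group_def by blast
  have "B \<one>\<^bsub>G\<^esub> \<otimes>\<^bsub>G\<^esub> B \<one>\<^bsub>G\<^esub> = B \<one>\<^bsub>G\<^esub>"
    using rb[of "\<one>\<^bsub>G\<^esub>" "\<one>\<^bsub>G\<^esub>"] by (simp add: gsimps)
  hence "inv\<^bsub>G\<^esub> (B \<one>\<^bsub>G\<^esub>) \<otimes>\<^bsub>G\<^esub> (B \<one>\<^bsub>G\<^esub> \<otimes>\<^bsub>G\<^esub> B \<one>\<^bsub>G\<^esub>) = inv\<^bsub>G\<^esub> (B \<one>\<^bsub>G\<^esub>) \<otimes>\<^bsub>G\<^esub> B \<one>\<^bsub>G\<^esub>"
    by simp
  thus ?thesis by (simp only: gsimps)
qed

lemma rb_conj_id: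
  assumes "rb_group G A B"
  shows "B a \<otimes>\<^bsub>G\<^esub> B b \<otimes>\<^bsub>G\<^esub> inv\<^bsub>G\<^esub> (B a) =
    B ((a \<otimes>\<^bsub>G\<^esub> B a) \<otimes>\<^bsub>G\<^esub> (b \<otimes>\<^bsub>G\<^esub> B b) \<otimes>\<^bsub>G\<^esub> inv\<^bsub>G\<^esub> (a \<otimes>\<^bsub>G\<^esub> B a) \<otimes>\<^bsub>G\<^esub>
       (B a \<otimes>\<^bsub>G\<^esub> inv\<^bsub>G\<^esub> (B b) \<otimes>\<^bsub>G\<^esub> inv\<^bsub>G\<^esub> (B a)))"
proof -
  have rb: "B a \<otimes>\<^bsub>G\<^esub> B b = B (a \<otimes>\<^bsub>G\<^esub> B a \<otimes>\<^bsub>G\<^esub> b \<otimes>\<^bsub>G\<^esub> inv\<^bsub>G\<^esub> (B a))" for a b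
    using assms unfolding rb_group_def by blast
  define y where "y = inv\<^bsub>G\<^esub> (B a) \<otimes>\<^bsub>G\<^esub> inv\<^bsub>G\<^esub> a \<otimes>\<^bsub>G\<^esub> B a"
  have "B a \<otimes>\<^bsub>G\<^esub> B y = B \<one>\<^bsub>G\<^esub>" using rb[of a y] unfolding y_def by (simp add: gsimps)
  hence "B a \<otimes>\<^bsub>G\<^esub> B y = \<one>\<^bsub>G\<^esub>" using rb_one[OF assms] by simp
  hence "inv\<^bsub>G\<^esub> (B a) \<otimes>\<^bsub>G\<^esub> (B a \<otimes>\<^bsub>G\<^esub> B y) = inv\<^bsub>G\<^esub> (B a)" by (simp add: gsimps)
  hence By: "B y = inv\<^bsub>G\<^esub> (B a)" by (simp only: gsimps)
  define X where "X = a \<otimes>\<^bsub>G\<^esub> B a \<otimes>\<^bsub>G\<^esub> b \<otimes>\<^bsub>G\<^esub> inv\<^bsub>G\<^esub> (B a)"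
  have BX: "B X = B a \<otimes>\<^bsub>G\<^esub> B b" unfolding X_def by (rule rb[symmetric])
  have "B a \<otimes>\<^bsub>G\<^esub> B b \<otimes>\<^bsub>G\<^esub> inv\<^bsub>G\<^esub> (B a) = B X \<otimes>\<^bsub>G\<^esub> B y" by (simp add: BX By)
  also have "\<dots> = B (X \<otimes>\<^bsub>G\<^esub> B X \<otimes>\<^bsub>G\<^esub> y \<otimes>\<^bsub>G\<^esub> inv\<^bsub>G\<^esub> (B X))" by (rule rb)
  also have "X \<otimes>\<^bsub>G\<^esub> B X \<otimes>\<^bsub>G\<^esub> y \<otimes>\<^bsub>G\<^esub> inv\<^bsub>G\<^esub> (B X) =
    (a \<otimes>\<^bsub>G\<^esub> B a) \<otimes>\<^bsub>G\<^esub> (b \<otimes>\<^bsub>G\<^esub> B b) \<otimes>\<^bsub>G\<^esub> inv\<^bsub>G\<^esub> (a \<otimes>\<^bsub>G\<^esub> B a) \<otimes>\<^bsub>G\<^esub>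
       (B a \<otimes>\<^bsub>G\<^esub> inv\<^bsub>G\<^esub> (B b) \<otimes>\<^bsub>G\<^esub> inv\<^bsub>G\<^esub> (B a))"
    unfolding BX unfolding X_def y_def by (simp add: gsimps)
  finally show ?thesis .
qed

lemma vd_linear:
  fixes L :: "'a::euclidean_space \<Rightarrow> 'b::real_normed_vector"
  assumes "linear L" "(V has_vector_derivative z) (at x)"
  shows "((\<lambda>s. L (V s)) has_vector_derivative L z) (at x)"
proof -
  have "bounded_linear L" using assms(1) linear_conv_bounded_linear by blast
  thus ?thesis by (rule bounded_linear.has_vector_derivative[OF _ assms(2)])
qed

lemma rb_lie_LG:
  assumes "rb_group G A B"
  shows "rb_lie (lie_bracket G U c) (lie_diff U c \<one>\<^bsub>G\<^esub> B c)"
proof -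
  let ?DB = "lie_diff U c \<one>\<^bsub>G\<^esub> B c"
  have bsm: "smooth_map A A B" using assms unfolding rb_group_def by blast
  note B1 = rb_one[OF assms]
  have velB: "vel c \<one>\<^bsub>G\<^esub> (\<lambda>r. B (p r)) (?DB v)" if "vel c \<one>\<^bsub>G\<^esub> p v" for p v
    by (rule vel_map[OF atl atl bsm ch one ch B1 one that])
  have "(c \<circ> B \<circ> inv_into U c) differentiable (at (c \<one>\<^bsub>G\<^esub>))"
    by (rule smooth_on_diff1[OF smooth_mapD[OF bsm ch ch]]) (use one B1 in auto)
  hence linDB: "linear ?DB" unfolding lie_diff_def by (rule linear_frechet_derivative)
  have brr: "lie_bracket G U c = br" by (intro ext bracket_eq)
  have main: "br (?DB x) (?DB y) = ?DB (br (?DB x) y + br x (?DB y) + br x y)" for x y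
  proof -
    let ?a = "chart_curve U c \<one>\<^bsub>G\<^esub> x" and ?b = "chart_curve U c \<one>\<^bsub>G\<^esub> y"
    have va: "vel c \<one>\<^bsub>G\<^esub> ?a x" and vb: "vel c \<one>\<^bsub>G\<^esub> ?b y" by (rule vel_chart)+
    note vBa = velB[OF va] and vBb = velB[OF vb]
    note vg1 = vel_mult[OF va vBa] and vp1 = vel_mult[OF vb vBb]
    note vp2 = vel_inv[OF vBb]
    note fL = fam_conj[OF vBa vBb]
    note F1 = fam_conj[OF vg1 vp1] and F2 = fam_conj[OF vBa vp2]
    let ?g1 = "\<lambda>s. ?a s \<otimes>\<^bsub>G\<^esub> B (?a s)" and ?p1 = "\<lambda>r. ?b r \<otimes>\<^bsub>G\<^esub> B (?b r)"
    let ?Q = "\<lambda>s r. (?g1 s \<otimes>\<^bsub>G\<^esub> ?p1 r \<otimes>\<^bsub>G\<^esub> inv\<^bsub>G\<^esub> (?g1 s)) \<otimes>\<^bsub>G\<^esub>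
                  (B (?a s) \<otimes>\<^bsub>G\<^esub> inv\<^bsub>G\<^esub> (B (?b r)) \<otimes>\<^bsub>G\<^esub> inv\<^bsub>G\<^esub> (B (?a s)))"
    let ?V = "\<lambda>s. AdK (c (?g1 s)) (y + ?DB y) + AdK (c (B (?a s))) (- ?DB y)"
    have "\<forall>\<^sub>F s in nhds 0. vel c \<one>\<^bsub>G\<^esub> (?Q s) (?V s)"
      using eventually_conj[OF F1(1) F2(1)] by (rule eventually_mono) (auto intro: vel_mult)
    hence "\<forall>\<^sub>F s in nhds 0. vel c \<one>\<^bsub>G\<^esub> (\<lambda>r. B (?Q s r)) (?DB (?V s))"
      by (rule eventually_mono) (rule velB)
    from MX[OF this vd_linear[OF linDB has_vector_derivative_add[OF F1(2) F2(2)]]]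
    have R: "mixed2 (\<lambda>s r. c (B (?Q s r))) =
       ?DB (br (x + ?DB x) (y + ?DB y) + br (?DB x) (- ?DB y))" .
    have L: "mixed2 (\<lambda>s r. c (B (?a s) \<otimes>\<^bsub>G\<^esub> B (?b r) \<otimes>\<^bsub>G\<^esub> inv\<^bsub>G\<^esub> (B (?a s)))) = br (?DB x) (?DB y)"
      by (rule MX[OF fL])
    have "(\<lambda>s r. c (B (?a s) \<otimes>\<^bsub>G\<^esub> B (?b r) \<otimes>\<^bsub>G\<^esub> inv\<^bsub>G\<^esub> (B (?a s)))) = (\<lambda>s r. c (B (?Q s r)))"
      by (intro ext) (simp only: rb_conj_id[OF assms])
    hence "br (?DB x) (?DB y) = ?DB (br (x + ?DB x) (y + ?DB y) + br (?DB x) (- ?DB y))"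
      using L R by simp
    also have "br (x + ?DB x) (y + ?DB y) + br (?DB x) (- ?DB y) = br (?DB x) y + br x (?DB y) + br x y"
      by (simp add: br_add1 br_add2 br_neg2 algebra_simps)
    finally show ?thesis .
  qed
  show ?thesis unfolding rb_lie_def brr using linDB main by blast
qed

end


locale CM =
  fixes H :: "('h::{t2_space, second_countable_topology}) monoid"
    and AH :: "('h set \<times> ('h \<Rightarrow> 'eh::euclidean_space)) set"
    and G :: "('g::{t2_space, second_countable_topology}) monoid"
    and AG :: "('g set \<times> ('g \<Rightarrow> 'eg::euclidean_space)) set"
    and t :: "'h \<Rightarrow> 'g" and \<Phi> :: "'g \<Rightarrow> 'h \<Rightarrow> 'h"
    and UH cH UG cG
  assumes cm: "crossed_module H AH G AG t \<Phi>"
    and chH: "(UH, cH) \<in> AH" and oneH: "\<one>\<^bsub>H\<^esub> \<in> UH"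
    and chG: "(UG, cG) \<in> AG" and oneG: "\<one>\<^bsub>G\<^esub> \<in> UG"
begin

lemma lgH: "lie_group H AH" and lgG: "lie_group G AG" and thom: "t \<in> hom H G"
  and tsm: "smooth_map AH AG t" and phiso: "\<And>a. \<Phi> a \<in> iso H H"
  and phsm: "smooth_map (prod_atlas AG AH) AH (\<lambda>(a, p). \<Phi> a p)"
  using cm unfolding crossed_module_def by auto

sublocale LH: LG H AH UH cH by (unfold_locales) (rule lgH, rule chH, rule oneH)
sublocale LGG: LG G AG UG cG by (unfold_locales) (rule lgG, rule chG, rule oneG)

lemma phi_mult: "\<Phi> a (p \<otimes>\<^bsub>H\<^esub> q) = \<Phi> a p \<otimes>\<^bsub>H\<^esub> \<Phi> a q"
  using phiso[of a] unfolding iso_def hom_def by (auto simp: LH.carr)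

lemma phi_one: "\<Phi> a \<one>\<^bsub>H\<^esub> = \<one>\<^bsub>H\<^esub>"
proof -
  have "\<Phi> a \<one>\<^bsub>H\<^esub> \<otimes>\<^bsub>H\<^esub> \<Phi> a \<one>\<^bsub>H\<^esub> = \<Phi> a \<one>\<^bsub>H\<^esub>"
    using phi_mult[of a "\<one>\<^bsub>H\<^esub>" "\<one>\<^bsub>H\<^esub>"] by (simp add: LH.gsimps)
  hence "inv\<^bsub>H\<^esub> (\<Phi> a \<one>\<^bsub>H\<^esub>) \<otimes>\<^bsub>H\<^esub> (\<Phi> a \<one>\<^bsub>H\<^esub> \<otimes>\<^bsub>H\<^esub> \<Phi> a \<one>\<^bsub>H\<^esub>) = inv\<^bsub>H\<^esub> (\<Phi> a \<one>\<^bsub>H\<^esub>) \<otimes>\<^bsub>H\<^esub> \<Phi> a \<one>\<^bsub>H\<^esub>"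
    by simp
  thus ?thesis by (simp only: LH.gsimps)
qed

lemma t_one: "t \<one>\<^bsub>H\<^esub> = \<one>\<^bsub>G\<^esub>"
proof -
  have tm: "t (p \<otimes>\<^bsub>H\<^esub> q) = t p \<otimes>\<^bsub>G\<^esub> t q" for p q
    using thom unfolding hom_def by (auto simp: LH.carr)
  have "t \<one>\<^bsub>H\<^esub> \<otimes>\<^bsub>G\<^esub> t \<one>\<^bsub>H\<^esub> = t \<one>\<^bsub>H\<^esub>"
    using tm[of "\<one>\<^bsub>H\<^esub>" "\<one>\<^bsub>H\<^esub>"] by (simp add: LH.gsimps)
  hence "inv\<^bsub>G\<^esub> (t \<one>\<^bsub>H\<^esub>) \<otimes>\<^bsub>G\<^esub> (t \<one>\<^bsub>H\<^esub> \<otimes>\<^bsub>G\<^esub> t \<one>\<^bsub>H\<^esub>) = inv\<^bsub>G\<^esub> (t \<one>\<^bsub>H\<^esub>) \<otimes>\<^bsub>G\<^esub> t \<one>\<^bsub>H\<^esub>"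
    by simp
  thus ?thesis by (simp only: LGG.gsimps)
qed

definition Pt where "Pt = loc2 UG cG UH cH cH (\<lambda>(a, p). \<Phi> a p)"

definition act where
  "act \<gamma> v = frechet_derivative (\<lambda>z. frechet_derivative Pt (at z) (0, v)) (at (cG \<one>\<^bsub>G\<^esub>, cH \<one>\<^bsub>H\<^esub>)) (\<gamma>, 0)"

lemma Pt_smooth: "smooth_on ((\<lambda>(x, y). (cG x, cH y)) ` ((UG \<times> UH) \<inter> (\<lambda>(a, p). \<Phi> a p) -` UH)) Pt"
  unfolding Pt_def by (rule loc2_smooth[OF phsm chG chH chH])

lemma fam_act:
  assumes "vel cG \<one>\<^bsub>G\<^esub> g \<gamma>" "vel cH \<one>\<^bsub>H\<^esub> p v"
  shows "\<forall>\<^sub>F s in nhds 0. vel cH \<one>\<^bsub>H\<^esub> (\<lambda>r. \<Phi> (g s) (p r)) (frechet_derivative Pt (at (cG (g s), cH \<one>\<^bsub>H\<^esub>)) (0, v))"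
    "((\<lambda>s. frechet_derivative Pt (at (cG (g s), cH \<one>\<^bsub>H\<^esub>)) (0, v)) has_vector_derivative act \<gamma> v) (at 0)"
proof -
  have g0: "g 0 = \<one>\<^bsub>G\<^esub>" and gc: "continuous (at 0) g"
    and gd: "((\<lambda>s. cG (g s)) has_vector_derivative \<gamma>) (at 0)" using assms(1) unfolding vel_def by auto
  have e1: "\<forall>\<^sub>F s in nhds 0. g s \<in> UG" by (rule ev_in[OF gc LGG.cf(1)]) (simp add: g0 oneG)
  have "vel cH \<one>\<^bsub>H\<^esub> (\<lambda>r. \<Phi> (g s) (p r)) (frechet_derivative Pt (at (cG (g s), cH \<one>\<^bsub>H\<^esub>)) (0, v))"
    if "g s \<in> UG" for s
  proof -
    have "(\<lambda>(a, p). \<Phi> a p) (g s, \<one>\<^bsub>H\<^esub>) = \<one>\<^bsub>H\<^esub>" by (simp add: phi_one)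
    from vel_map2[OF LGG.atl LH.atl LH.atl phsm chG chH chH that oneH this oneH vel_const assms(2)]
    show ?thesis unfolding Pt_def by simp
  qed
  thus "\<forall>\<^sub>F s in nhds 0. vel cH \<one>\<^bsub>H\<^esub> (\<lambda>r. \<Phi> (g s) (p r)) (frechet_derivative Pt (at (cG (g s), cH \<one>\<^bsub>H\<^esub>)) (0, v))"
    using e1 by (auto elim: eventually_mono)
  have kd: "((\<lambda>s. (cG (g s), cH \<one>\<^bsub>H\<^esub>)) has_vector_derivative (\<gamma>, 0)) (at 0)"
    using gd by (intro has_vector_derivative_Pair) (auto intro: has_vector_derivative_const)
  have "(\<one>\<^bsub>G\<^esub>, \<one>\<^bsub>H\<^esub>) \<in> (UG \<times> UH) \<inter> (\<lambda>(a, p). \<Phi> a p) -` UH" using oneG oneH by (simp add: phi_one)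
  hence "(cG \<one>\<^bsub>G\<^esub>, cH \<one>\<^bsub>H\<^esub>) \<in> (\<lambda>(x, y). (cG x, cH y)) ` ((UG \<times> UH) \<inter> (\<lambda>(a, p). \<Phi> a p) -` UH)"
    by force
  hence "(\<lambda>z. frechet_derivative Pt (at z) (0, v)) differentiable (at (cG (g 0), cH \<one>\<^bsub>H\<^esub>))"
    unfolding g0 by (rule smooth_on_diff2[OF Pt_smooth])
  from vd_chain[OF kd this]
  show "((\<lambda>s. frechet_derivative Pt (at (cG (g s), cH \<one>\<^bsub>H\<^esub>)) (0, v)) has_vector_derivative act \<gamma> v) (at 0)"
    unfolding act_def g0 .
qed

lemma action_eq: "lie_action G UG cG H UH cH \<Phi> x u = act x u"
  unfolding lie_action_def by (rule MX[OF fam_act[OF LGG.vel_chart LH.vel_chart]])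

lemma act_add2: "act \<gamma> (v + w) = act \<gamma> v + act \<gamma> w"
proof -
  let ?g = "chart_curve UG cG \<one>\<^bsub>G\<^esub> \<gamma>" and ?p = "chart_curve UH cH \<one>\<^bsub>H\<^esub> v"
    and ?q = "chart_curve UH cH \<one>\<^bsub>H\<^esub> w"
  note f1 = fam_act[OF LGG.vel_chart[of \<gamma>] LH.vel_chart[of v]]
  note f2 = fam_act[OF LGG.vel_chart[of \<gamma>] LH.vel_chart[of w]]
  note f3 = fam_act[OF LGG.vel_chart[of \<gamma>] LH.vel_mult[OF LH.vel_chart[of v] LH.vel_chart[of w]]]
  have "\<forall>\<^sub>F s in nhds 0. vel cH \<one>\<^bsub>H\<^esub> (\<lambda>r. \<Phi> (?g s) (?p r) \<otimes>\<^bsub>H\<^esub> \<Phi> (?g s) (?q r))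
     (frechet_derivative Pt (at (cG (?g s), cH \<one>\<^bsub>H\<^esub>)) (0, v) + frechet_derivative Pt (at (cG (?g s), cH \<one>\<^bsub>H\<^esub>)) (0, w))"
    using eventually_conj[OF f1(1) f2(1)] by (rule eventually_mono) (auto intro: LH.vel_mult)
  from MX[OF this has_vector_derivative_add[OF f1(2) f2(2)]]
  have "mixed2 (\<lambda>s r. cH (\<Phi> (?g s) (?p r) \<otimes>\<^bsub>H\<^esub> \<Phi> (?g s) (?q r))) = act \<gamma> v + act \<gamma> w" .
  moreover have "mixed2 (\<lambda>s r. cH (\<Phi> (?g s) (?p r \<otimes>\<^bsub>H\<^esub> ?q r))) = act \<gamma> (v + w)"
    by (rule MX[OF f3])
  ultimately show ?thesis by (simp add: phi_mult)
qed

lemma act_zero2: "act \<gamma> 0 = 0"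
proof -
  have "mixed2 (\<lambda>s r. cH (\<Phi> (chart_curve UG cG \<one>\<^bsub>G\<^esub> \<gamma> s) \<one>\<^bsub>H\<^esub>)) = act \<gamma> 0"
    by (rule MX[OF fam_act[OF LGG.vel_chart vel_const]])
  thus ?thesis using LH.mixed2_const by (simp add: phi_one)
qed

lemma act_neg2: "act \<gamma> (- w) = - act \<gamma> w"
  using act_add2[of \<gamma> w "- w"] act_zero2[of \<gamma>] by (simp add: eq_neg_iff_add_eq_0 add.commute)

lemma act_add1: "act (x + x') v = act x v + act x' v"
proof -
  have "(cG \<one>\<^bsub>G\<^esub>, cH \<one>\<^bsub>H\<^esub>) \<in> (\<lambda>(x, y). (cG x, cH y)) ` ((UG \<times> UH) \<inter> (\<lambda>(a, p). \<Phi> a p) -` UH)"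
    using oneG oneH by (force simp: phi_one)
  hence "linear (frechet_derivative (\<lambda>z. frechet_derivative Pt (at z) (0, v)) (at (cG \<one>\<^bsub>G\<^esub>, cH \<one>\<^bsub>H\<^esub>)))"
    by (intro linear_frechet_derivative smooth_on_diff2[OF Pt_smooth])
  from linear_add[OF this, of "(x, 0)" "(x', 0)"] show ?thesis unfolding act_def by simp
qed


lemma main_cm:
  assumes "rb_crossed_module H AH G AG t \<Phi> B1 B0"
  shows "rb_lie_crossed_module
           (lie_bracket H UH cH) (lie_bracket G UG cG)
           (lie_diff UH cH \<one>\<^bsub>H\<^esub> t cG)
           (lie_action G UG cG H UH cH \<Phi>)
           (lie_diff UH cH \<one>\<^bsub>H\<^esub> B1 cH)
           (lie_diff UG cG \<one>\<^bsub>G\<^esub> B0 cG)"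
proof -
  have rb1: "rb_group H AH B1" and rb0: "rb_group G AG B0" and tB: "t \<circ> B1 = B0 \<circ> t"
    and rb3: "\<And>a p. \<Phi> (B0 a) (B1 p) =
        B1 (\<Phi> (a \<otimes>\<^bsub>G\<^esub> B0 a) (p \<otimes>\<^bsub>H\<^esub> B1 p) \<otimes>\<^bsub>H\<^esub> \<Phi> (B0 a) (inv\<^bsub>H\<^esub> (B1 p)))"
    using assms unfolding rb_crossed_module_def by auto
  let ?D1 = "lie_diff UH cH \<one>\<^bsub>H\<^esub> B1 cH" and ?D0 = "lie_diff UG cG \<one>\<^bsub>G\<^esub> B0 cG"
    and ?DT = "lie_diff UH cH \<one>\<^bsub>H\<^esub> t cG"
  have b1sm: "smooth_map AH AH B1" using rb1 unfolding rb_group_def by blast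
  have b0sm: "smooth_map AG AG B0" using rb0 unfolding rb_group_def by blast
  note B11 = LH.rb_one[OF rb1] and B01 = LGG.rb_one[OF rb0]
  have vB1: "vel cH \<one>\<^bsub>H\<^esub> (\<lambda>r. B1 (p r)) (?D1 v)" if "vel cH \<one>\<^bsub>H\<^esub> p v" for p v
    by (rule vel_map[OF LH.atl LH.atl b1sm chH oneH chH B11 oneH that])
  have vB0: "vel cG \<one>\<^bsub>G\<^esub> (\<lambda>r. B0 (p r)) (?D0 v)" if "vel cG \<one>\<^bsub>G\<^esub> p v" for p v
    by (rule vel_map[OF LGG.atl LGG.atl b0sm chG oneG chG B01 oneG that])
  have vT: "vel cG \<one>\<^bsub>G\<^esub> (\<lambda>r. t (p r)) (?DT v)" if "vel cH \<one>\<^bsub>H\<^esub> p v" for p v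
    by (rule vel_map[OF LH.atl LGG.atl tsm chH oneH chG t_one oneG that])
  have "(cH \<circ> B1 \<circ> inv_into UH cH) differentiable (at (cH \<one>\<^bsub>H\<^esub>))"
    by (rule smooth_on_diff1[OF smooth_mapD[OF b1sm chH chH]]) (use oneH B11 in auto)
  hence linD1: "linear ?D1" unfolding lie_diff_def by (rule linear_frechet_derivative)
  have ii: "?DT \<circ> ?D1 = ?D0 \<circ> ?DT"
  proof
    fix u
    note vb = LH.vel_chart[of u]
    have "vel cG \<one>\<^bsub>G\<^esub> (\<lambda>r. t (B1 (chart_curve UH cH \<one>\<^bsub>H\<^esub> u r))) (?DT (?D1 u))"
      by (rule vT[OF vB1[OF vb]])
    moreover have "vel cG \<one>\<^bsub>G\<^esub> (\<lambda>r. B0 (t (chart_curve UH cH \<one>\<^bsub>H\<^esub> u r))) (?D0 (?DT u))"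
      by (rule vB0[OF vT[OF vb]])
    moreover have "t (B1 q) = B0 (t q)" for q using fun_cong[OF tB, of q] by simp
    ultimately show "(?DT \<circ> ?D1) u = (?D0 \<circ> ?DT) u" using vel_unique by fastforce
  qed
  have iii: "act (?D0 x) (?D1 u) = ?D1 (act x (?D1 u) + act (?D0 x) u + act x u)" for x u
  proof -
    let ?a = "chart_curve UG cG \<one>\<^bsub>G\<^esub> x" and ?b = "chart_curve UH cH \<one>\<^bsub>H\<^esub> u"
    have va: "vel cG \<one>\<^bsub>G\<^esub> ?a x" by (rule LGG.vel_chart)
    have vb: "vel cH \<one>\<^bsub>H\<^esub> ?b u" by (rule LH.vel_chart)
    note vBa = vB0[OF va] and vBb = vB1[OF vb]
    note vg1 = LGG.vel_mult[OF va vBa] and vp1 = LH.vel_mult[OF vb vBb]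
    note vp2 = LH.vel_inv[OF vBb]
    note fL = fam_act[OF vBa vBb]
    note F1 = fam_act[OF vg1 vp1] and F2 = fam_act[OF vBa vp2]
    let ?g1 = "\<lambda>s. ?a s \<otimes>\<^bsub>G\<^esub> B0 (?a s)" and ?p1 = "\<lambda>r. ?b r \<otimes>\<^bsub>H\<^esub> B1 (?b r)"
    let ?Q = "\<lambda>s r. \<Phi> (?g1 s) (?p1 r) \<otimes>\<^bsub>H\<^esub> \<Phi> (B0 (?a s)) (inv\<^bsub>H\<^esub> (B1 (?b r)))"
    let ?V = "\<lambda>s. frechet_derivative Pt (at (cG (?g1 s), cH \<one>\<^bsub>H\<^esub>)) (0, u + ?D1 u) +
                 frechet_derivative Pt (at (cG (B0 (?a s)), cH \<one>\<^bsub>H\<^esub>)) (0, - ?D1 u)"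
    have "\<forall>\<^sub>F s in nhds 0. vel cH \<one>\<^bsub>H\<^esub> (?Q s) (?V s)"
      using eventually_conj[OF F1(1) F2(1)] by (rule eventually_mono) (auto intro: LH.vel_mult)
    hence "\<forall>\<^sub>F s in nhds 0. vel cH \<one>\<^bsub>H\<^esub> (\<lambda>r. B1 (?Q s r)) (?D1 (?V s))"
      by (rule eventually_mono) (rule vB1)
    from MX[OF this LH.vd_linear[OF linD1 has_vector_derivative_add[OF F1(2) F2(2)]]]
    have R: "mixed2 (\<lambda>s r. cH (B1 (?Q s r))) =
       ?D1 (act (x + ?D0 x) (u + ?D1 u) + act (?D0 x) (- ?D1 u))" .
    have L: "mixed2 (\<lambda>s r. cH (\<Phi> (B0 (?a s)) (B1 (?b r)))) = act (?D0 x) (?D1 u)"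
      by (rule MX[OF fL])
    have "(\<lambda>s r. cH (\<Phi> (B0 (?a s)) (B1 (?b r)))) = (\<lambda>s r. cH (B1 (?Q s r)))"
      by (intro ext) (simp only: rb3)
    hence "act (?D0 x) (?D1 u) = ?D1 (act (x + ?D0 x) (u + ?D1 u) + act (?D0 x) (- ?D1 u))"
      using L R by simp
    also have "act (x + ?D0 x) (u + ?D1 u) + act (?D0 x) (- ?D1 u) = act x (?D1 u) + act (?D0 x) u + act x u"
      by (simp add: act_add1 act_add2 act_neg2 algebra_simps)
    finally show ?thesis .
  qed
  have acteq: "lie_action G UG cG H UH cH \<Phi> = act" by (intro ext action_eq)
  show ?thesis unfolding rb_lie_crossed_module_def acteq
    using LH.rb_lie_LG[OF rb1] LGG.rb_lie_LG[OF rb0] ii iii by blast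
qed

end


theorem theorem5p3:
  fixes H :: "('h::{t2_space, second_countable_topology}) monoid"
    and AH :: "('h set \<times> ('h \<Rightarrow> 'eh::euclidean_space)) set"
    and G :: "('g::{t2_space, second_countable_topology}) monoid"
    and AG :: "('g set \<times> ('g \<Rightarrow> 'eg::euclidean_space)) set"
    and t :: "'h \<Rightarrow> 'g" and \<Phi> :: "'g \<Rightarrow> 'h \<Rightarrow> 'h"
    and \<B>1 :: "'h \<Rightarrow> 'h" and \<B>0 :: "'g \<Rightarrow> 'g"
  assumes "crossed_module H AH G AG t \<Phi>"
    and "rb_crossed_module H AH G AG t \<Phi> \<B>1 \<B>0"
    and "(UH, cH) \<in> AH" and "\<one>\<^bsub>H\<^esub> \<in> UH"
    and "(UG, cG) \<in> AG" and "\<one>\<^bsub>G\<^esub> \<in> UG"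
  shows "rb_lie_crossed_module
           (lie_bracket H UH cH) (lie_bracket G UG cG)
           (lie_diff UH cH \<one>\<^bsub>H\<^esub> t cG)
           (lie_action G UG cG H UH cH \<Phi>)
           (lie_diff UH cH \<one>\<^bsub>H\<^esub> \<B>1 cH)
           (lie_diff UG cG \<one>\<^bsub>G\<^esub> \<B>0 cG)"
proof -
  interpret CM H AH G AG t \<Phi> UH cH UG cG
    by unfold_locales (use assms in auto)
  show ?thesis by (rule main_cm[OF assms(2)])
qed

end
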